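(* For all integers $r \geq 3$ and $k \geq \max\{r-1,4\}$, we have $N(k,r) \geq (2r-4)k$.
   Context: A $k$-power is a word of the form $u^k$ (concatenation of $k$ copies of $u$) with $u$ nonempty. An $r$-antipower is a word $u_1 \cdots u_r$ with $|u_1| = \cdots = |u_r|$ and $u_1,\dots,u_r$ pairwise distinct. $N(k,r)$ is the smallest integer $\ell$ such that every binary word (over $\{0,1\}$) of length $\ell$ contains either a $k$-power or an $r$-antipower as a factor (contiguous subword). *)

theory Defs
  imports Main
begin

definition is_factor :: "'a list \<Rightarrow> 'a list \<Rightarrow> bool" where
  "is_factor v w \<longleftrightarrow> (\<exists>p s. w = p @ v @ s)"

definition is_power :: "nat \<Rightarrow> 'a list \<Rightarrow> bool" where
  "is_power k w \<longleftrightarrow> (\<exists>u. u \<noteq> [] \<and> w = concat (replicate k u))"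

definition is_antipower :: "nat \<Rightarrow> 'a list \<Rightarrow> bool" where
  "is_antipower r w \<longleftrightarrow> (\<exists>us. length us = r \<and> w = concat us \<and> distinct us \<and>
      (\<forall>u\<in>set us. \<forall>v\<in>set us. length u = length v))"

definition N :: "nat \<Rightarrow> nat \<Rightarrow> nat" where
  "N k r = (LEAST l. \<forall>w :: bool list. length w = l \<longrightarrow>
      (\<exists>v. is_factor v w \<and> (is_power k v \<or> is_antipower r v)))"

end

theory Submission
  imports Defs
begin

lemma concat_replicate_nth:
  assumes "i < k * length u"
  shows "concat (replicate k u) ! i = u ! (i mod length u)"
  using assms
proof (induction k arbitrary: i)
  case 0
  then show ?case by simp
next
  case (Suc k)
  show ?case
  proof (cases "i < length u")
    case True
    then show ?thesis by (simp add: nth_append)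
  next
    case False
    then have "i - length u < k * length u" using Suc.prems by simp
    then have "concat (replicate k u) ! (i - length u) = u ! ((i - length u) mod length u)"
      by (rule Suc.IH)
    moreover have "(i - length u) mod length u = i mod length u"
      using False by (simp add: le_mod_geq)
    ultimately show ?thesis using False by (simp add: nth_append)
  qed
qed

lemma concat_eqlen_nth:
  assumes "\<forall>x\<in>set us. length x = m" "j < length us" "t < m"
  shows "concat us ! (j*m + t) = us ! j ! t"
  using assms
proof (induction us arbitrary: j)
  case Nil
  then show ?case by simp
next
  case (Cons x xs)
  show ?case
  proof (cases j)
    case 0
    then show ?thesis using Cons.prems by (simp add: nth_append)
  next
    case (Suc j')
    have "concat xs ! (j'*m + t) = xs ! j' ! t" using Cons.IH Cons.prems Suc by auto
    then show ?thesis using Cons.prems Suc by (simp add: nth_append algebra_simps)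
  qed
qed

lemma length_concat_eqlen:
  "\<forall>x\<in>set us. length x = m \<Longrightarrow> length (concat us) = length us * m"
  by (induction us) auto

lemma factor_pos:
  assumes "is_factor v w"
  shows "\<exists>p. p + length v \<le> length w \<and> (\<forall>i<length v. v!i = w!(p+i))"
proof -
  obtain a b where ab: "w = a @ v @ b" using assms unfolding is_factor_def by blast
  show ?thesis
    by (rule exI[of _ "length a"]) (simp add: ab nth_append)
qed

lemma per_mod:
  fixes f :: "nat \<Rightarrow> 'a"
  assumes per: "\<forall>z. z0 \<le> z \<longrightarrow> z < z0 + n \<longrightarrow> f z = f (z+P)" and P: "P > 0"
  shows "i < n + P \<Longrightarrow> f (z0+i) = f (z0 + i mod P)"
proof (induction i rule: less_induct)
  case (less i)
  show ?case
  proof (cases "i < P")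
    case True
    then show ?thesis by simp
  next
    case False
    then have lt: "i - P < i" using P by simp
    have "i - P < n + P" using less.prems by simp
    then have IH: "f (z0 + (i-P)) = f (z0 + (i-P) mod P)" using less.IH lt by blast
    have "f (z0 + (i-P)) = f (z0 + (i-P) + P)"
      using per less.prems False by auto
    also have "z0 + (i-P) + P = z0 + i" using False by simp
    finally have "f (z0 + i) = f (z0 + (i-P))" by simp
    also have "\<dots> = f (z0 + (i-P) mod P)" by (rule IH)
    also have "(i-P) mod P = i mod P" using False by (simp add: le_mod_geq)
    finally show ?thesis .
  qed
qed


section \<open>Existence of N(k,r)\<close>

lemma prefix_blocks_concat:
  "r*c \<le> length w \<Longrightarrow> concat (map (\<lambda>j. take c (drop (j*c) w)) [0..<r]) = take (r*c) w"
proof (induction r)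
  case 0
  then show ?case by simp
next
  case (Suc r)
  then have "r*c \<le> length w" by simp
  then have "concat (map (\<lambda>j. take c (drop (j*c) w)) [0..<Suc r])
      = take (r*c) w @ take c (drop (r*c) w)" using Suc.IH by simp
  also have "\<dots> = take (r*c + c) w" by (simp add: take_add)
  finally show ?case by (simp add: add.commute)
qed

lemma prefix_no_anti:
  assumes "r*c \<le> length w" "\<not> is_antipower r (take (r*c) w)"
  shows "\<exists>i j. i < j \<and> j < r \<and> (\<forall>t<c. w!(i*c+t) = w!(j*c+t))"
proof (rule ccontr)
  assume H: "\<not> ?thesis"
  define us where "us = map (\<lambda>j. take c (drop (j*c) w)) [0..<r]"
  have len: "\<forall>x\<in>set us. length x = c"
  proof
    fix x assume "x \<in> set us"
    then obtain j where j: "j < r" "x = take c (drop (j*c) w)" unfolding us_def by auto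
    have "j*c + c \<le> r*c" using j(1) by (metis add.commute mult_Suc mult_le_mono1 Suc_leI)
    then show "length x = c" using j assms(1) by simp
  qed
  have nth_us: "us!a!t = w!(a*c+t)" if "a < r" "t < c" for a t
  proof -
    have "a*c + c \<le> r*c" using that(1) by (metis add.commute mult_Suc mult_le_mono1 Suc_leI)
    then show ?thesis using that assms(1) unfolding us_def by simp
  qed
  have "distinct us"
  proof (unfold distinct_conv_nth, intro allI impI)
    fix a b assume ab: "a < length us" "b < length us" "a \<noteq> b"
    then have ar: "a < r" "b < r" unfolding us_def by auto
    have diff: "\<exists>t<c. w!(a*c+t) \<noteq> w!(b*c+t)"
    proof (cases "a < b")
      case True
      then show ?thesis using H ar by blast
    next
      case False
      then have "b < a" using ab(3) by simp
      then show ?thesis using H ar by (metis (no_types, lifting))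
    qed
    then obtain t where t: "t < c" "w!(a*c+t) \<noteq> w!(b*c+t)" by blast
    show "us!a \<noteq> us!b"
      using t nth_us[OF ar(1) t(1)] nth_us[OF ar(2) t(1)] by metis
  qed
  moreover have "length us = r" unfolding us_def by simp
  moreover have "take (r*c) w = concat us" unfolding us_def using prefix_blocks_concat[OF assms(1)] by simp
  ultimately have "is_antipower r (take (r*c) w)"
    unfolding is_antipower_def using len by auto
  then show False using assms(2) by simp
qed

lemma existence:
  fixes k r :: nat
  assumes k: "k \<ge> 1" and r: "r \<ge> 1"
  shows "\<exists>l. \<forall>w::'a list. length w = l \<longrightarrow> (\<exists>v. is_factor v w \<and> (is_power k v \<or> is_antipower r v))"
proof -
  define c0 where "c0 = k*r*r*r"
  define l where "l = r * (c0 + r*r)"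
  have "\<forall>w::'a list. length w = l \<longrightarrow> (\<exists>v. is_factor v w \<and> (is_power k v \<or> is_antipower r v))"
  proof (intro allI impI)
    fix w :: "'a list"
    assume lw: "length w = l"
    show "\<exists>v. is_factor v w \<and> (is_power k v \<or> is_antipower r v)"
    proof (cases "\<exists>c. r*c \<le> l \<and> is_antipower r (take (r*c) w)")
      case True
      then obtain c where "is_antipower r (take (r*c) w)" by blast
      moreover have "is_factor (take (r*c) w) w" unfolding is_factor_def
        by (rule exI[of _ "[]"], rule exI[of _ "drop (r*c) w"]) simp
      ultimately show ?thesis by blast
    next
      case False
      have "\<forall>c. \<exists>ij. r*c \<le> l \<longrightarrow> (fst ij < snd ij \<and> snd ij < r \<and>
               (\<forall>t<c. w!(fst ij*c+t) = w!(snd ij*c+t)))"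
      proof
        fix c
        show "\<exists>ij. r*c \<le> l \<longrightarrow> (fst ij < snd ij \<and> snd ij < r \<and>
               (\<forall>t<c. w!(fst ij*c+t) = w!(snd ij*c+t)))"
        proof (cases "r*c \<le> l")
          case True
          then obtain i j where "i < j \<and> j < r \<and> (\<forall>t<c. w!(i*c+t) = w!(j*c+t))"
            using prefix_no_anti[of r c w] False lw by auto
          then show ?thesis by (intro exI[of _ "(i,j)"]) simp
        qed simp
      qed
      then obtain g where g: "\<And>c. r*c \<le> l \<Longrightarrow> fst (g c) < snd (g c) \<and> snd (g c) < r \<and>
               (\<forall>t<c. w!(fst (g c)*c+t) = w!(snd (g c)*c+t))"
        using choice[of "\<lambda>c ij. r*c \<le> l \<longrightarrow> (fst ij < snd ij \<and> snd ij < r \<and>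
               (\<forall>t<c. w!(fst ij*c+t) = w!(snd ij*c+t)))"] by blast
      define C where "C = {c0..c0+r*r}"
      have inC: "r*c \<le> l" if "c \<in> C" for c
        using that unfolding C_def l_def by (simp add: mult_le_mono2)
      have "g ` C \<subseteq> {..<r} \<times> {..<r}"
      proof
        fix x assume "x \<in> g ` C"
        then obtain c where c: "c \<in> C" "x = g c" by blast
        then show "x \<in> {..<r} \<times> {..<r}" using g[OF inC[OF c(1)]]
          by (auto simp: mem_Times_iff)
      qed
      moreover have "card C = r*r + 1" unfolding C_def by simp
      moreover have "card ({..<r} \<times> {..<r}) = r*r" by (simp add: card_cartesian_product)
      ultimately have "\<not> inj_on g C"
        using card_inj_on_le[of g C "{..<r} \<times> {..<r}"] by auto
      then obtain c1' c2' where c12': "c1' \<in> C" "c2' \<in> C" "c1' \<noteq> c2'" "g c1' = g c2'"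
        unfolding inj_on_def by blast
      obtain c1 c2 where c12: "c1 \<in> C" "c2 \<in> C" "c1 < c2" "g c1 = g c2"
      proof (cases "c1' < c2'")
        case True
        then show ?thesis using that c12' by blast
      next
        case False
        then have "c2' < c1'" using c12'(3) by simp
        then show ?thesis using that c12' by metis
      qed
      define i where "i = fst (g c1)"
      define j where "j = snd (g c1)"
      have g1: "i < j" "j < r" "\<forall>t<c1. w!(i*c1+t) = w!(j*c1+t)"
        using g[OF inC[OF c12(1)]] unfolding i_def j_def by auto
      have g2: "\<forall>t<c2. w!(i*c2+t) = w!(j*c2+t)"
        using g[OF inC[OF c12(2)]] c12(4) unfolding i_def j_def by auto
      define d where "d = j - i"
      define e where "e = c2 - c1"
      define P where "P = d*e"
      have d1: "d \<ge> 1" "d < r" "j = i + d" using g1 unfolding d_def by auto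
      have e1: "e \<ge> 1" "c2 = c1 + e" using c12 unfolding e_def by auto
      have c1ge: "c1 \<ge> c0" using c12(1) unfolding C_def by simp
      have ele: "e \<le> r*r" using c12 unfolding C_def e_def by auto
      have "i + (k-1)*d \<le> (r-1) + (k-1)*(r-1)"
        using g1 d1 by (intro add_mono mult_le_mono2) auto
      also have "\<dots> = k*(r-1)" using k by (cases k) auto
      finally have A: "i + (k-1)*d \<le> k*(r-1)" .
      have "(i + (k-1)*d)*e \<le> (k*(r-1))*(r*r)"
        using A ele by (rule mult_le_mono)
      also have "\<dots> \<le> k*r*(r*r)" by (intro mult_le_mono1) simp
      also have "\<dots> = c0" unfolding c0_def by simp
      finally have key: "i*e + (k-1)*P \<le> c1" using c1ge unfolding P_def by (simp add: algebra_simps)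
      have P1: "P \<ge> 1" unfolding P_def using d1 e1 by simp
      define z0 where "z0 = i*c2 + d*c1"
      have eq1: "j*c1 = i*c1 + d*c1" "j*c2 = i*c2 + d*c2" "d*c2 = d*c1 + P" "i*c2 = i*c1 + i*e"
        using d1 e1 unfolding P_def by (auto simp: algebra_simps)
      have per: "\<forall>z. z0 \<le> z \<longrightarrow> z < z0 + (k-1)*P \<longrightarrow> w!z = w!(z+P)"
      proof (intro allI impI)
        fix z assume z: "z0 \<le> z" "z < z0 + (k-1)*P"
        define y where "y = z - d*c1"
        have y1: "y \<ge> i*c2" "z = y + d*c1" using z unfolding y_def z0_def by auto
        have t1: "y - i*c1 < c1" using z key eq1 y1 unfolding z0_def by linarith
        have t2: "y - i*c2 < c2" using z key eq1 y1 e1 unfolding z0_def by linarith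
        have "w!(i*c1 + (y - i*c1)) = w!(j*c1 + (y - i*c1))" using g1(3) t1 by blast
        moreover have "i*c1 + (y - i*c1) = y" "j*c1 + (y - i*c1) = z" using y1 eq1 by linarith+
        ultimately have a: "w!y = w!z" by simp
        have "w!(i*c2 + (y - i*c2)) = w!(j*c2 + (y - i*c2))" using g2 t2 by blast
        moreover have "i*c2 + (y - i*c2) = y" "j*c2 + (y - i*c2) = z + P" using y1 eq1 by linarith+
        ultimately have b: "w!y = w!(z+P)" by simp
        show "w!z = w!(z+P)" using a b by simp
      qed
      have "d*e \<le> j*e + e" using d1 by (simp add: add_mult_distrib)
      moreover have "(j+1)*c2 \<le> r*c2" using g1 by (intro mult_le_mono1) simp
      moreover have "j*c2 = j*c1 + j*e" using e1 by (simp add: algebra_simps)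
      moreover have "k*P = (k-1)*P + P" using k by (cases k) auto
      moreover have "r*c2 \<le> l" using inC[OF c12(2)] .
      ultimately have bound: "z0 + k*P \<le> length w"
        using key eq1 lw e1 unfolding z0_def P_def by (simp add: algebra_simps)
      define u where "u = take P (drop z0 w)"
      define v where "v = take (k*P) (drop z0 w)"
      have "P \<le> k*P" using k by simp
      then have "z0 + P \<le> length w" using bound by linarith
      then have lu: "length u = P" unfolding u_def by simp
      have lv: "length v = k*P" using bound unfolding v_def by simp
      have "v = concat (replicate k u)"
      proof (rule nth_equalityI)
        show "length v = length (concat (replicate k u))" using lv lu by (simp add: length_concat sum_list_replicate)
      next
        fix x assume "x < length v"
        then have x: "x < k*P" using lv by simp
        have "v!x = w!(z0+x)" using x bound unfolding v_def by simp
        also have "\<dots> = w!(z0 + x mod P)"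
        proof -
          have "x < (k-1)*P + P" using x k by (cases k) auto
          then show ?thesis using per_mod[of z0 "(k-1)*P" "\<lambda>z. w!z" P x] per P1 by simp
        qed
        also have "\<dots> = u!(x mod P)"
        proof -
          have xm: "x mod P < P" using P1 by simp
          then have "z0 + x mod P < length w" using \<open>z0 + P \<le> length w\<close> by linarith
          then show ?thesis unfolding u_def using xm by simp
        qed
        also have "\<dots> = concat (replicate k u) ! x" using concat_replicate_nth[of x k u] x lu by simp
        finally show "v!x = concat (replicate k u) ! x" .
      qed
      moreover have "u \<noteq> []" using lu P1 by auto
      ultimately have "is_power k v" unfolding is_power_def by blast
      moreover have "is_factor v w" unfolding is_factor_def
      proof (intro exI)
        show "w = take z0 w @ v @ drop (k*P) (drop z0 w)" unfolding v_def by (simp only: append_take_drop_id)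
      qed
      ultimately show ?thesis by blast
    qed
  qed
  then show ?thesis by blast
qed


section \<open>The construction\<close>

definition wf :: "nat \<Rightarrow> nat \<Rightarrow> nat \<Rightarrow> bool" where
  "wf q k i = ((i mod q = 0) \<noteq> (i = q*k - 1))"

lemma M_mod:
  fixes q k :: nat
  assumes "q \<ge> 1" "k \<ge> 1"
  shows "(q*k - 1) mod q = q - 1" "q*k - 1 = q*(k-1) + (q-1)"
proof -
  obtain k' where "k = Suc k'" using assms(2) by (cases k) auto
  then have "q*k = q*(k-1) + q" by simp
  then show e: "q*k - 1 = q*(k-1) + (q-1)" using assms by linarith
  have "(q*(k-1) + (q-1)) mod q = (q-1) mod q" by (rule mod_mult_self4)
  also have "\<dots> = q - 1" using assms by simp
  finally show "(q*k - 1) mod q = q - 1" unfolding e .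
qed

lemma no_anti:
  assumes q: "q \<ge> 1"
  shows "\<exists>j1 j2. j1 < q+2 \<and> j2 < q+2 \<and> j1 \<noteq> j2 \<and>
           (\<forall>t<m. wf q k (p+j1*m+t) = wf q k (p+j2*m+t))"
proof -
  define M where "M = q*k - 1"
  define bad where "bad j \<longleftrightarrow> p + j*m \<le> M \<and> M < p + j*m + m" for j
  have uniq: "j1 = j2" if "bad j1" "bad j2" for j1 j2
  proof (rule ccontr)
    assume "j1 \<noteq> j2"
    then consider "j1 < j2" | "j2 < j1" by linarith
    then show False
    proof cases
      case 1
      then have "j1*m + m \<le> j2*m" by (metis Suc_leI add.commute mult_Suc mult_le_mono1)
      then show False using that unfolding bad_def by linarith
    next
      case 2
      then have "j2*m + m \<le> j1*m" by (metis Suc_leI add.commute mult_Suc mult_le_mono1)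
      then show False using that unfolding bad_def by linarith
    qed
  qed
  define J where "J = {j. j < q+2 \<and> \<not> bad j}"
  have cardJ: "card J \<ge> q+1"
  proof (cases "\<exists>j0. j0 < q+2 \<and> bad j0")
    case True
    then obtain j0 where j0: "j0 < q+2" "bad j0" by blast
    have "J = {..<q+2} - {j0}" unfolding J_def using uniq j0 by auto
    then show ?thesis using j0 by simp
  next
    case False
    then have "J = {..<q+2}" unfolding J_def by auto
    then show ?thesis by simp
  qed
  define h where "h j = (p + j*m) mod q" for j
  have "h ` J \<subseteq> {..<q}" unfolding h_def using q by auto
  then have "\<not> inj_on h J"
    using card_inj_on_le[of h J "{..<q}"] cardJ by auto
  then obtain j1 j2 where j: "j1 \<in> J" "j2 \<in> J" "j1 \<noteq> j2" "h j1 = h j2"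
    unfolding inj_on_def by blast
  have "wf q k (p+j1*m+t) = wf q k (p+j2*m+t)" if t: "t < m" for t
  proof -
    have n1: "p+j1*m+t \<noteq> M" using j(1) t unfolding J_def bad_def by auto
    have n2: "p+j2*m+t \<noteq> M" using j(2) t unfolding J_def bad_def by auto
    have "(p+j1*m+t) mod q = (p+j2*m+t) mod q"
      using j(4) unfolding h_def by (metis mod_add_left_eq)
    then show ?thesis using n1 n2 unfolding wf_def M_def by simp
  qed
  then show ?thesis using j unfolding J_def by blast
qed


lemma no_power:
  fixes q k m p :: nat
  assumes q: "q \<ge> 1" and kq: "k \<ge> q+1" and k4: "k \<ge> 4" and m: "m \<ge> 1"
    and len: "p + k*m \<le> 2*q*k - 1"
    and per: "\<forall>x. p \<le> x \<longrightarrow> x < p + (k-1)*m \<longrightarrow> wf q k x = wf q k (x+m)"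
  shows False
proof -
  define M where "M = q*k - 1"
  have k1: "k \<ge> 1" using k4 by simp
  have Mm: "M mod q = q - 1" and Me: "M = q*(k-1) + (q-1)"
    using M_mod[OF q k1] unfolding M_def by auto
  have qk1: "q*k \<ge> 1" using q k1 by simp
  have M1: "M + 1 = q*k" unfolding M_def using qk1 by simp
  have two: "2*q*k = q*k + q*k" by simp
  have wfM: "wf q k M = (M mod q \<noteq> 0)" unfolding wf_def M_def by simp
  have wfo: "wf q k x = (x mod q = 0)" if "x \<noteq> M" for x
    using that unfolding wf_def M_def by simp
  have km1: "(k-1)*m \<ge> k - 1" using m by simp
  have kk: "(k-1)*m + m = k*m" using k1 by (cases k) auto
  show False
  proof (cases "q dvd m")
    case True
    then obtain s where s: "m = q*s" by blast
    then have s1: "s \<ge> 1" using m by (cases s) auto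
    have "q*k \<le> m*k" using s s1 by simp
    then have kmq: "q*k \<le> k*m" by (simp add: mult.commute)
    have pM: "p \<le> M" using len kmq two unfolding M_def by linarith
    have Mlt: "M < p + k*m" using kmq M1 by linarith
    show False
    proof (cases "M < p + (k-1)*m")
      case True
      have "wf q k M = wf q k (M+m)" using per pM True by blast
      moreover have "(M+m) mod q = M mod q" using s by simp
      moreover have "M + m \<noteq> M" using m by simp
      ultimately show False using wfM wfo[of "M+m"] by (cases "M mod q = 0") auto
    next
      case False
      have "1 \<le> k - 1" using k4 by simp
      then have mle: "m \<le> (k-1)*m" using mult_le_mono1[of 1 "k-1" m] by simp
      have x1: "p \<le> M - m" using False mle by linarith
      have x2: "M - m < p + (k-1)*m" using Mlt kk False mle by arith
      have "wf q k (M-m) = wf q k (M-m+m)" using per x1 x2 by blast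
      moreover have "M - m + m = M" using False mle by linarith
      moreover have "M = (M - m) + q*s" using False mle s by linarith
      then have "M mod q = (M-m) mod q" by (metis mod_mult_self2)
      moreover have "M - m \<noteq> M" using m False mle by linarith
      ultimately show False using wfM wfo[of "M-m"] by (cases "M mod q = 0") auto
    qed
  next
    case False
    then have q2: "q \<ge> 2" using q by (cases "q = 1") auto
    have Mnz: "M mod q \<noteq> 0" using Mm q2 by simp
    have A: "x + m = M" if "p \<le> x" "x < p + (k-1)*m" "x mod q = 0" for x
    proof -
      have "wf q k x = wf q k (x+m)" using per that by blast
      moreover have "x \<noteq> M" using that(3) Mnz by auto
      moreover have "(x + m) mod q \<noteq> 0"
      proof
        assume "(x+m) mod q = 0"
        then have "q dvd x + m" by auto
        moreover have "q dvd x" using that(3) by auto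
        ultimately have "q dvd m" using dvd_add_right_iff by blast
        then show False using False by simp
      qed
      ultimately show ?thesis unfolding wf_def M_def using that(3) by auto
    qed
    have B: "x = M" if "p \<le> x" "x < p + (k-1)*m" "(x+m) mod q = 0" for x
    proof -
      have "wf q k x = wf q k (x+m)" using per that by blast
      moreover have "x + m \<noteq> M" using that(3) Mnz by auto
      moreover have "x mod q \<noteq> 0"
      proof
        assume "x mod q = 0"
        then have "q dvd x" by auto
        moreover have "q dvd x + m" using that(3) by auto
        ultimately have "q dvd m" using dvd_add_right_iff by blast
        then show False using False by simp
      qed
      ultimately show ?thesis unfolding wf_def M_def using that(3) by auto
    qed
    define x0 where "x0 = q * ((p+q-1) div q)"
    have "p + q - 1 = q * ((p+q-1) div q) + (p+q-1) mod q" by simp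
    moreover have "(p+q-1) mod q < q" using q by simp
    ultimately have x0b: "p \<le> x0" "x0 \<le> p + q - 1" unfolding x0_def by linarith+
    define y1 where "y1 = q * ((p+m+q-1) div q)"
    have "p + m + q - 1 = q * ((p+m+q-1) div q) + (p+m+q-1) mod q" by simp
    moreover have "(p+m+q-1) mod q < q" using q by simp
    ultimately have y1b: "p + m \<le> y1" "y1 \<le> p + m + q - 1" unfolding y1_def by linarith+
    define x1 where "x1 = y1 - m"
    have x1b: "p \<le> x1" "x1 \<le> p + q - 1" "x1 + m = y1" using y1b unfolding x1_def by linarith+
    have qI: "q - 1 < (k-1)*m" using km1 kq q by arith
    have x0l: "x0 < p + (k-1)*m" using x0b qI q by arith
    have x0m: "x0 mod q = 0" unfolding x0_def by simp
    have e0: "x0 + m = M" using A[OF x0b(1) x0l x0m] .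
    have x1l: "x1 < p + (k-1)*m" using x1b qI q by arith
    have x1m: "(x1 + m) mod q = 0" using x1b(3) unfolding y1_def by simp
    have e1: "x1 = M" using B[OF x1b(1) x1l x1m] .
    have d0: "q dvd x0" unfolding x0_def by simp
    have "q dvd x1 + m" using x1b unfolding y1_def by simp
    then have "q dvd x0 + m + m" using e0 e1 by simp
    then have d2m: "q dvd m + m" using d0 by (simp add: add.assoc dvd_add_right_iff)
    have "q dvd x0 + m + 1" using e0 M1 by simp
    then have dm1: "q dvd m + 1" using d0 by (metis add.assoc dvd_add_right_iff)
    then have "q dvd (m + 1) + (m + 1)" using dvd_add by blast
    then have "q dvd 2 + (m + m)" by (simp add: algebra_simps)
    then have "q dvd 2" using d2m by (metis dvd_add_left_iff)
    then have "q \<le> 2" by (simp add: dvd_imp_le)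
    then have q2': "q = 2" using q2 by simp
    then have modd: "m mod 2 = 1" using False by presburger
    have three: "3 \<le> (k-1)*m" using km1 k4 by linarith
    have allx: "\<forall>x. p \<le> x \<longrightarrow> x < p + 3 \<longrightarrow> (x + m = M \<or> x = M)"
    proof (intro allI impI)
      fix x assume x: "p \<le> x" "x < p + 3"
      show "x + m = M \<or> x = M"
      proof (cases "x mod 2 = 0")
        case True
        then show ?thesis using A[of x] x three q2' by simp
      next
        case False
        then have "(x+m) mod 2 = 0" using modd by presburger
        then show ?thesis using B[of x] x three q2' by simp
      qed
    qed
    have "(p + m = M \<or> p = M) \<and> (p + 1 + m = M \<or> p + 1 = M) \<and> (p + 2 + m = M \<or> p + 2 = M)"
      using spec[OF allx, of p] spec[OF allx, of "p+1"] spec[OF allx, of "p+2"] by simp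
    then show False using modd by presburger
  qed
qed


theorem corollary2:
  fixes k r :: nat
  assumes "r \<ge> 3" and "k \<ge> max (r - 1) 4"
  shows "N k r \<ge> (2 * r - 4) * k"
proof -
  define q where "q = r - 2"
  have q: "q \<ge> 1" and rq: "r = q + 2" using assms(1) unfolding q_def by auto
  have kq: "k \<ge> q + 1" and k4: "k \<ge> 4" using assms(2) rq by auto
  define n where "n = 2*q*k - 1"
  define wl where "wl = map (wf q k) [0..<n]"
  have lwl: "length wl = n" unfolding wl_def by simp
  have nwl: "wl ! i = wf q k i" if "i < n" for i using that unfolding wl_def by simp
  define Pr where "Pr l = (\<forall>w::bool list. length w = l \<longrightarrow>
      (\<exists>v. is_factor v w \<and> (is_power k v \<or> is_antipower r v)))" for l
  have ex: "\<exists>l. Pr l" using existence[of k r] assms unfolding Pr_def by auto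
  have good: "\<not> (is_power k v \<or> is_antipower r v)" if fv: "is_factor v wl" for v
  proof
    obtain p where p: "p + length v \<le> n" "\<forall>i<length v. v!i = wl!(p+i)"
      using factor_pos[OF fv] lwl by auto
    have pv: "v!i = wf q k (p+i)" if "i < length v" for i
      using p that nwl[of "p+i"] by simp
    assume "is_power k v \<or> is_antipower r v"
    then show False
    proof
      assume "is_power k v"
      then obtain u where u: "u \<noteq> []" "v = concat (replicate k u)" unfolding is_power_def by blast
      define m where "m = length u"
      have m: "m \<ge> 1" using u(1) unfolding m_def by (cases u) auto
      have lv: "length v = k*m" using u(2) unfolding m_def by (simp add: length_concat sum_list_replicate)
      have len: "p + k*m \<le> 2*q*k - 1" using p(1) lv unfolding n_def by simp
      have kk: "(k-1)*m + m = k*m" using k4 by (cases k) auto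
      have per: "\<forall>x. p \<le> x \<longrightarrow> x < p + (k-1)*m \<longrightarrow> wf q k x = wf q k (x+m)"
      proof (intro allI impI)
        fix x assume x: "p \<le> x" "x < p + (k-1)*m"
        have i1: "x - p < k*m" "x - p + m < k*m" using x kk by linarith+
        have "wf q k x = v!(x-p)" using pv[of "x-p"] i1 lv x by simp
        also have "\<dots> = u!((x-p) mod m)" using u(2) concat_replicate_nth[of "x-p" k u] i1 unfolding m_def by simp
        also have "\<dots> = u!((x-p+m) mod m)" by simp
        also have "\<dots> = v!(x-p+m)" using u(2) concat_replicate_nth[of "x-p+m" k u] i1 unfolding m_def by simp
        also have "\<dots> = wf q k (x+m)" using pv[of "x-p+m"] i1 lv x by simp
        finally show "wf q k x = wf q k (x+m)" .
      qed
      show False using no_power[OF q kq k4 m len per] .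
    next
      assume "is_antipower r v"
      then obtain us where us: "length us = r" "v = concat us" "distinct us"
        "\<forall>a\<in>set us. \<forall>b\<in>set us. length a = length b" unfolding is_antipower_def by blast
      define m where "m = length (us!0)"
      have "0 < length us" using us(1) assms(1) by linarith
      then have u0: "us!0 \<in> set us" by (rule nth_mem)
      have lus: "\<forall>a\<in>set us. length a = m"
      proof
        fix a assume "a \<in> set us"
        then show "length a = m" using us(4) u0 unfolding m_def by blast
      qed
      have lv: "length v = r*m" using us(1,2) length_concat_eqlen[OF lus] by simp
      obtain j1 j2 where j: "j1 < q+2" "j2 < q+2" "j1 \<noteq> j2"
          "\<forall>t<m. wf q k (p+j1*m+t) = wf q k (p+j2*m+t)"
      proof -
        have "\<exists>j1 j2. j1 < q+2 \<and> j2 < q+2 \<and> j1 \<noteq> j2 \<and>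
           (\<forall>t<m. wf q k (p+j1*m+t) = wf q k (p+j2*m+t))" by (rule no_anti[OF q])
        then show ?thesis using that by blast
      qed
      have blk: "us!j!t = wf q k (p+j*m+t)" if "j < q+2" "t < m" for j t
      proof -
        have "Suc j \<le> r" using that(1) rq by simp
        then have "Suc j * m \<le> r*m" by (rule mult_le_mono1)
        then have "j*m + m \<le> r*m" by simp
        then have "j*m + t < length v" using lv that(2) by linarith
        then have "v!(j*m+t) = wf q k (p+(j*m+t))" by (rule pv)
        moreover have "v!(j*m+t) = us!j!t" using us(1,2) concat_eqlen_nth[OF lus, of j t] that rq by simp
        ultimately show ?thesis by (simp add: add.assoc)
      qed
      have "us!j1 = us!j2"
      proof (rule nth_equalityI)
        show "length (us!j1) = length (us!j2)" using lus j(1,2) us(1) rq by simp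
      next
        fix t assume "t < length (us!j1)"
        then have t: "t < m" using lus j(1) us(1) rq by simp
        show "us!j1!t = us!j2!t" using blk[OF j(1) t] blk[OF j(2) t] j(4) t by simp
      qed
      moreover have "j1 < length us" "j2 < length us" using us(1) j rq by auto
      ultimately show False using us(3) j(3) nth_eq_iff_index_eq by blast
    qed
  qed
  have notP: "\<not> Pr l" if "l < (2*r-4)*k" for l
  proof
    assume Pl: "Pr l"
    have "2*r-4 = 2*q" using rq by simp
    moreover have "2*q*k \<ge> 1" using q k4 by simp
    ultimately have "(2*r-4)*k = n + 1" unfolding n_def by simp
    then have ln: "l \<le> n" using that by simp
    define w where "w = take l wl"
    have "length w = l" unfolding w_def using ln lwl by simp
    then obtain v where v: "is_factor v w" "is_power k v \<or> is_antipower r v" using Pl unfolding Pr_def by blast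
    obtain a b where "w = a @ v @ b" using v(1) unfolding is_factor_def by blast
    then have "wl = a @ v @ (b @ drop l wl)" unfolding w_def by (metis append.assoc append_take_drop_id)
    then have "is_factor v wl" unfolding is_factor_def by blast
    then show False using good v(2) by blast
  qed
  have "N k r = (LEAST l. Pr l)" unfolding N_def Pr_def by simp
  moreover have "Pr (LEAST l. Pr l)" using LeastI_ex[OF ex] .
  ultimately have "Pr (N k r)" by simp
  then show ?thesis using notP by (meson not_le)
qed

end
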